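(* Let $Q\subset\mathbb{C}$ be an unshielded continuum with finest map $\varphi$ onto a locally connected continuum. If $a\in Q$ satisfies $\varphi^{-1}(\varphi(a))=\{a\}$, then $Q$ is locally connected at $a$.
   Context: $Q$ is unshielded if it equals the boundary of the component of $\widehat{\mathbb{C}}\setminus Q$ containing $\infty$. The finest map $\varphi$ of $Q$ is the monotone (continuous, connected fibers) surjection onto a locally connected continuum through which every monotone surjection of $Q$ onto a locally connected continuum factors via a monotone map. *)

theory Defs
  imports "HOL-Analysis.Analysis"
begin

definition continuum :: "'a::topological_space set \<Rightarrow> bool" where
  "continuum S \<longleftrightarrow> compact S \<and> connected S \<and> S \<noteq> {}"

definition lc_continuum :: "'a::topological_space set \<Rightarrow> bool" where
  "lc_continuum S \<longleftrightarrow> continuum S \<and> locally connected S"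

definition monotone_map :: "'a::topological_space set \<Rightarrow> ('a \<Rightarrow> 'b::topological_space) \<Rightarrow> 'b set \<Rightarrow> bool" where
  "monotone_map X f Y \<longleftrightarrow> continuous_on X f \<and> f ` X = Y \<and>
      (\<forall>y\<in>Y. connected {x\<in>X. f x = y})"

text \<open>Q is unshielded: Q is the boundary of the component of the complement of Q
  containing infinity, i.e. of the unbounded component of the complement in the plane.\<close>
definition unshielded :: "complex set \<Rightarrow> bool" where
  "unshielded Q \<longleftrightarrow> (\<exists>U. U \<in> components (- Q) \<and> \<not> bounded U \<and> Q = frontier U)"

definition finest_map :: "complex set \<Rightarrow> (complex \<Rightarrow> 'b::metric_space) \<Rightarrow> 'b set \<Rightarrow> bool" where
  "finest_map Q \<phi> Y \<longleftrightarrow> lc_continuum Y \<and> monotone_map Q \<phi> Y \<and>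
     (\<forall>(\<psi>::complex \<Rightarrow> 'b) Z. lc_continuum Z \<and> monotone_map Q \<psi> Z \<longrightarrow>
        (\<exists>h. monotone_map Y h Z \<and> (\<forall>x\<in>Q. \<psi> x = h (\<phi> x))))"

end

theory Submission
  imports Defs
begin

theorem lemma3p7:
  fixes Q :: "complex set" and \<phi> :: "complex \<Rightarrow> 'b::metric_space" and Y :: "'b set" and a :: complex
  assumes "continuum Q" and "unshielded Q" and "finest_map Q \<phi> Y"
    and "a \<in> Q" and "{x\<in>Q. \<phi> x = \<phi> a} = {a}"
  shows "locally_connected_at a (top_of_set Q)"
proof -
  have cQ: "compact Q" using assms(1) by (simp add: continuum_def)
  have lcY: "locally connected Y" and mm: "monotone_map Q \<phi> Y"
    using assms(3) by (auto simp: finest_map_def lc_continuum_def)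
  have contf: "continuous_on Q \<phi>" and fim: "\<phi> ` Q = Y"
    and fib: "\<And>y. y \<in> Y \<Longrightarrow> connected {x\<in>Q. \<phi> x = y}"
    using mm by (auto simp: monotone_map_def)
  have fib': "\<And>y. y \<in> Y \<Longrightarrow> connected (Q \<inter> \<phi> -` {y})"
  proof -
    fix y assume "y \<in> Y"
    moreover have "Q \<inter> \<phi> -` {y} = {x\<in>Q. \<phi> x = y}" by auto
    ultimately show "connected (Q \<inter> \<phi> -` {y})" using fib by simp
  qed
  have closedmap: "\<And>C. closedin (top_of_set Q) C \<Longrightarrow> closedin (top_of_set Y) (\<phi> ` C)"
  proof -
    fix C assume "closedin (top_of_set Q) C"
    then have "C \<subseteq> Q" by (rule closedin_imp_subset)
    have "compact C" using closedin_compact[OF cQ \<open>closedin (top_of_set Q) C\<close>] .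
    have "continuous_on C \<phi>" using continuous_on_subset[OF contf \<open>C \<subseteq> Q\<close>] .
    then have "compact (\<phi> ` C)" using compact_continuous_image \<open>compact C\<close> by simp
    then have "closed (\<phi> ` C)" by (simp add: compact_imp_closed)
    moreover have "\<phi> ` C \<subseteq> Y" using \<open>C \<subseteq> Q\<close> fim by blast
    ultimately show "closedin (top_of_set Y) (\<phi> ` C)" by (simp add: closed_subset)
  qed
  show ?thesis
    unfolding locally_connected_at_def neighbourhood_base_at_def
  proof (intro allI impI)
    fix W assume W: "openin (top_of_set Q) W \<and> a \<in> W"
    define C where "C = Q - W"
    have clC: "closedin (top_of_set Q) C" using W unfolding C_def
      by (simp add: closedin_diff)
    have "closedin (top_of_set Y) (\<phi> ` C)" using closedmap clC by blast
    then have opV: "openin (top_of_set Y) (Y - \<phi> ` C)"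
      by (simp add: openin_diff)
    have "\<phi> a \<notin> \<phi> ` C"
    proof
      assume "\<phi> a \<in> \<phi> ` C"
      then obtain x where "x \<in> C" "\<phi> x = \<phi> a" by auto
      then have "x \<in> {x\<in>Q. \<phi> x = \<phi> a}" unfolding C_def by auto
      then have "x = a" using assms(5) by auto
      then show False using \<open>x \<in> C\<close> W unfolding C_def by auto
    qed
    moreover have "\<phi> a \<in> Y" using fim assms(4) by blast
    ultimately have "\<phi> a \<in> Y - \<phi> ` C" by blast
    then obtain U where U: "openin (top_of_set Y) U" "connected U" "\<phi> a \<in> U" "U \<subseteq> Y - \<phi> ` C"
      using lcY opV unfolding locally_connected by blast
    define P where "P = Q \<inter> \<phi> -` U"
    have fpi: "\<phi> \<in> Q \<rightarrow> Y" using fim by blast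
    have opP: "openin (top_of_set Q) P" unfolding P_def
      by (rule continuous_openin_preimage[OF contf fpi U(1)])
    have cP: "connected P" unfolding P_def
      using connected_closed_monotone_preimage[OF contf fim closedmap fib' U(2)] U(4) by blast
    have "P \<subseteq> W"
    proof
      fix x assume "x \<in> P"
      then have "x \<in> Q" "\<phi> x \<in> U" unfolding P_def by auto
      then have "x \<notin> C" using U(4) by blast
      then show "x \<in> W" using \<open>x \<in> Q\<close> unfolding C_def by blast
    qed
    moreover have "a \<in> P" unfolding P_def using assms(4) U(3) by blast
    moreover have "connectedin (top_of_set Q) P"
      using cP opP by (simp add: connectedin_subtopology openin_imp_subset)
    ultimately show "\<exists>U V. openin (top_of_set Q) U \<and> (openin (top_of_set Q) V \<and> connectedin (top_of_set Q) V) \<and> a \<in> U \<and> U \<subseteq> V \<and> V \<subseteq> W"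
      using opP by blast
  qed
qed

end
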